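(* Let $B\ge 1$, let $D$ be any distribution on $\mathscr{X}\times\{\pm1\}$, let $\rho\in[0,1/2)$, and let $s\in\mathscr{F}_B=\{s:\mathscr{X}\to[-B,B]\}$ be any (measurable) scorer. Then, with $\ell=\ell^{\mathrm{unh}}$, $$\mathrm{regret}^{D}_{01}(s)\;\le\;\mathrm{regret}^{D,\mathscr{F}_B}_{\ell}(s)\;=\;\frac{1}{1-2\rho}\cdot\mathrm{regret}^{\mathrm{SLN}(D,\rho),\mathscr{F}_B}_{\ell}(s).$$
   Context: The unhinged loss is $\ell^{\mathrm{unh}}(y,v)=1-yv$ for $y\in\{\pm1\}$, $v\in\mathbb{R}$. For a loss $\ell$, distribution $D$ and function class $\mathscr{F}$, the $\ell$-risk is $\mathbb{L}^D_\ell(s)=\mathbb{E}_{(\mathsf{X},\mathsf{Y})\sim D}[\ell(\mathsf{Y},s(\mathsf{X}))]$ and the restricted regret is $\mathrm{regret}^{D,\mathscr{F}}_\ell(s)=\mathbb{L}^D_\ell(s)-\inf_{t\in\mathscr{F}}\mathbb{L}^D_\ell(t)$. The zero-one loss is $\ell^{01}(y,v)=\mathbb{1}[yv<0]+\tfrac12\mathbb{1}[v=0]$ and $\mathrm{regret}^D_{01}(s)=\mathrm{regret}^{D,\mathbb{R}^{\mathscr{X}}}_{\ell^{01}}(s)$ (infimum over all measurable scorers). For $\rho\in[0,1/2)$, $\mathrm{SLN}(D,\rho)$ is the distribution with the same marginal on $\mathscr{X}$ as $D$ in which each label of $D$ is independently flipped with probability $\rho$; its class-probability function is $\bar\eta(x)=(1-2\rho)\eta(x)+\rho$.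 *)

theory Defs
  imports "HOL-Probability.Probability"
begin

text \<open>Instances live on a measurable space M; a distribution D on X x {+-1} is a
  probability measure with sets D = sets (M times count_space {-1,1}).\<close>

definition label_space :: "real measure" where
  "label_space = count_space {-1, 1}"

definition unhinged_loss :: "real \<Rightarrow> real \<Rightarrow> real" where
  "unhinged_loss y v = 1 - y * v"

definition zero_one_loss :: "real \<Rightarrow> real \<Rightarrow> real" where
  "zero_one_loss y v = (if y * v < 0 then 1 else 0) + (if v = 0 then 1/2 else 0)"

definition risk :: "('a \<times> real) measure \<Rightarrow> (real \<Rightarrow> real \<Rightarrow> real) \<Rightarrow> ('a \<Rightarrow> real) \<Rightarrow> real" where
  "risk D l s = (\<integral>z. l (snd z) (s (fst z)) \<partial>D)"

definition regret :: "('a \<times> real) measure \<Rightarrow> ('a \<Rightarrow> real) set \<Rightarrow> (real \<Rightarrow> real \<Rightarrow> real) \<Rightarrow> ('a \<Rightarrow> real) \<Rightarrow> real" where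
  "regret D F l s = risk D l s - (INF t\<in>F. risk D l t)"

definition bounded_scorers :: "'a measure \<Rightarrow> real \<Rightarrow> ('a \<Rightarrow> real) set" where
  "bounded_scorers M B = {s \<in> borel_measurable M. \<forall>x\<in>space M. -B \<le> s x \<and> s x \<le> B}"

definition regret01 :: "'a measure \<Rightarrow> ('a \<times> real) measure \<Rightarrow> ('a \<Rightarrow> real) \<Rightarrow> real" where
  "regret01 M D s = regret D (borel_measurable M) zero_one_loss s"

definition SLN :: "'a measure \<Rightarrow> ('a \<times> real) measure \<Rightarrow> real \<Rightarrow> ('a \<times> real) measure" where
  "SLN M D \<rho> = distr (D \<Otimes>\<^sub>M measure_pmf (bernoulli_pmf \<rho>)) (M \<Otimes>\<^sub>M label_space)
      (\<lambda>((x, y), b). (x, if b then - y else y))"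

end

theory Submission
  imports Defs
begin

lemma INF_affine:
  fixes R :: "'b \<Rightarrow> real"
  assumes "F \<noteq> {}" "\<And>t. t \<in> F \<Longrightarrow> R t \<ge> L" "c > 0"
  shows "(INF t\<in>F. c * R t + d) = c * (INF t\<in>F. R t) + d"
proof (rule antisym)
  have bR: "bdd_below (R ` F)" using assms(2) by (intro bdd_belowI2[where m=L]) auto
  have bR': "bdd_below ((\<lambda>t. c * R t + d) ` F)"
    using assms(2,3) by (intro bdd_belowI2[where m="c*L+d"]) auto
  show "c * (INF t\<in>F. R t) + d \<le> (INF t\<in>F. c * R t + d)"
    using assms(1,3) by (intro cINF_greatest) (auto intro!: cINF_lower bR)
  have "(INF t\<in>F. c * R t + d) \<le> c * R t + d" if "t \<in> F" for t
    using that bR' by (intro cINF_lower) auto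
  hence "((INF t\<in>F. c * R t + d) - d) / c \<le> R t" if "t \<in> F" for t
    using that assms(3) by (auto simp: field_simps)
  hence "((INF t\<in>F. c * R t + d) - d) / c \<le> (INF t\<in>F. R t)"
    using assms(1) by (intro cINF_greatest) auto
  thus "(INF t\<in>F. c * R t + d) \<le> c * (INF t\<in>F. R t) + d"
    using assms(3) by (auto simp: field_simps)
qed

lemma zo_meas[measurable]: "(\<lambda>v. zero_one_loss c v) \<in> borel_measurable borel"
  unfolding zero_one_loss_def by measurable

lemma zo_sum: "zero_one_loss 1 v + zero_one_loss (-1) v = 1"
  unfolding zero_one_loss_def by auto

theorem mainTheorem4:
  fixes M :: "'a measure" and D :: "('a \<times> real) measure"
    and \<rho> B :: real and s :: "'a \<Rightarrow> real"
  assumes "prob_space D"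
    and "sets D = sets (M \<Otimes>\<^sub>M label_space)"
    and "B \<ge> 1"
    and "0 \<le> \<rho>" and "\<rho> < 1/2"
    and "s \<in> bounded_scorers M B"
  shows "regret01 M D s \<le> regret D (bounded_scorers M B) unhinged_loss s
       \<and> regret D (bounded_scorers M B) unhinged_loss s
           = 1 / (1 - 2 * \<rho>) * regret (SLN M D \<rho>) (bounded_scorers M B) unhinged_loss s"
proof -
  interpret D: prob_space D by fact
  note sD = assms(2)
  have spD: "space D = space M \<times> {-1,1}"
    using sets_eq_imp_space_eq[OF sD] by (simp add: space_pair_measure label_space_def)
  have mD: "measurable D N = measurable (M \<Otimes>\<^sub>M label_space) N" for N :: "'c measure"
    by (rule measurable_cong_sets[OF sD refl])
  let ?F = "bounded_scorers M B"
  have snd_meas[measurable]: "(\<lambda>z. snd z) \<in> borel_measurable D"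
  proof -
    have "snd \<in> measurable (M \<Otimes>\<^sub>M label_space) label_space" by simp
    moreover have "(\<lambda>y::real. y) \<in> borel_measurable label_space"
      unfolding label_space_def by simp
    ultimately show ?thesis unfolding mD by (rule measurable_comp[unfolded comp_def])
  qed
  have fst_meas: "fst \<in> measurable D M" unfolding mD by simp
  have tm: "(\<lambda>z. t (fst z)) \<in> borel_measurable D" if "t \<in> borel_measurable M" for t
    using measurable_comp[OF fst_meas that] by (simp add: comp_def)
  have Fb: "\<bar>t (fst z)\<bar> \<le> B" if "t \<in> ?F" "z \<in> space D" for t z
    using that spD unfolding bounded_scorers_def by (auto simp: mem_Times_iff)
  have yb: "snd z = 1 \<or> snd z = -1" if "z \<in> space D" for z
    using that spD by (auto simp: mem_Times_iff)
  have int_unh: "integrable D (\<lambda>z. unhinged_loss (snd z) (t (fst z)))" if "t \<in> ?F" for t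
  proof (rule D.integrable_const_bound[where B="1+B"])
    show "AE z in D. norm (unhinged_loss (snd z) (t (fst z))) \<le> 1 + B"
    proof (rule AE_I2)
      fix z assume z: "z \<in> space D"
      show "norm (unhinged_loss (snd z) (t (fst z))) \<le> 1 + B"
        using Fb[OF that z] yb[OF z] unfolding unhinged_loss_def by auto
    qed
    show "(\<lambda>z. unhinged_loss (snd z) (t (fst z))) \<in> borel_measurable D"
      using tm[of t] that snd_meas unfolding unhinged_loss_def bounded_scorers_def
      by (intro borel_measurable_diff borel_measurable_times) auto
  qed
  have risk_lb: "risk D unhinged_loss t \<ge> -(1+B)" if "t \<in> ?F" for t
  proof -
    have "(\<integral>z. -(1+B) \<partial>D) \<le> risk D unhinged_loss t"
      unfolding risk_def
    proof (intro integral_mono int_unh[OF that])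
      fix z assume z: "z \<in> space D"
      show "-(1+B) \<le> unhinged_loss (snd z) (t (fst z))"
        using Fb[OF that z] yb[OF z] unfolding unhinged_loss_def by auto
    qed simp
    thus ?thesis by (simp add: D.prob_space)
  qed
  have sF: "s \<in> ?F" by fact
  have Fne: "?F \<noteq> {}" using sF by auto
  have bddF: "bdd_below ((\<lambda>t. risk D unhinged_loss t) ` ?F)"
    using risk_lb by (intro bdd_belowI2[where m="-(1+B)"]) auto
  define P where "P = D \<Otimes>\<^sub>M measure_pmf (bernoulli_pmf \<rho>)"
  interpret PP: pair_prob_space D "measure_pmf (bernoulli_pmf \<rho>)"
    by (simp add: pair_prob_space_def pair_sigma_finite_def D.sigma_finite_measure_axioms
        prob_space_measure_pmf D.prob_space_axioms prob_space_imp_sigma_finite)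
  interpret P: prob_space P unfolding P_def by (rule PP.prob_space_axioms)
  define \<phi> where "\<phi> = (\<lambda>((x::'a, y::real), b::bool). (x, if b then - y else y))"
  have spP: "space P = space D \<times> UNIV" unfolding P_def by (simp add: space_pair_measure)
  have fstP: "fst \<in> measurable P D" unfolding P_def by simp
  have sndP: "snd \<in> measurable P (measure_pmf (bernoulli_pmf \<rho>))" unfolding P_def by simp
  have ysP: "(\<lambda>w. snd (fst w)) \<in> borel_measurable P"
    using measurable_comp[OF fstP snd_meas] by (simp add: comp_def)
  have bP: "Measurable.pred P (\<lambda>w. snd w)"
    using sndP by (simp add: measurable_def)
  have phi_meas: "\<phi> \<in> measurable P (M \<Otimes>\<^sub>M label_space)"
  proof (rule measurable_Pair[of "\<lambda>w. fst (\<phi> w)" _ _ "\<lambda>w. snd (\<phi> w)", simplified])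
    show "(\<lambda>w. fst (\<phi> w)) \<in> measurable P M"
      using measurable_comp[OF fstP fst_meas] by (simp add: comp_def \<phi>_def case_prod_beta)
    show "(\<lambda>w. snd (\<phi> w)) \<in> measurable P label_space"
      unfolding label_space_def
    proof (subst measurable_count_space_eq2, simp, intro conjI ballI Pi_I)
      fix w assume "w \<in> space P"
      then have "fst w \<in> space D" using spP by auto
      from yb[OF this] show "snd (\<phi> w) \<in> {-1,1}" by (auto simp: \<phi>_def case_prod_beta)
    next
      fix a :: real assume "a \<in> {-1,1}"
      have bset: "{w \<in> space P. snd w} \<in> sets P" using bP by (simp add: pred_def)
      have gm: "(\<lambda>w. snd (\<phi> w)) \<in> borel_measurable P"
        unfolding \<phi>_def case_prod_beta snd_conv
        by (rule measurable_If[OF borel_measurable_uminus[OF ysP] ysP bset])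
      have "{w \<in> space P. snd (\<phi> w) = a} \<in> sets P"
        by (rule borel_measurable_eq[OF gm]) simp
      thus "(\<lambda>w. snd (\<phi> w)) -` {a} \<inter> space P \<in> sets P"
        by (simp add: pred_def vimage_def Int_def Collect_conj_eq[symmetric] conj_commute)
    qed
  qed
  have c_pos: "1 - 2 * \<rho> > 0" using assms by simp
  have riskSLN: "risk (SLN M D \<rho>) unhinged_loss t = 2 * \<rho> + (1 - 2 * \<rho>) * risk D unhinged_loss t"
    if tF: "t \<in> ?F" for t
  proof -
    let ?h = "\<lambda>z. unhinged_loss (snd z) (t (fst z))"
    have hD: "?h \<in> borel_measurable D" using int_unh[OF tF] by auto
    hence hm: "?h \<in> borel_measurable (M \<Otimes>\<^sub>M label_space)" using measurable_cong_sets[OF sD refl, of borel] by metis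
    have fm: "(\<lambda>w. ?h (\<phi> w)) \<in> borel_measurable P"
      using measurable_comp[OF phi_meas hm] by (simp add: comp_def)
    have fint: "integrable P (\<lambda>w. ?h (\<phi> w))"
    proof (rule P.integrable_const_bound[where B="1+B"])
      show "AE w in P. norm (?h (\<phi> w)) \<le> 1 + B"
      proof (rule AE_I2)
        fix w assume "w \<in> space P"
        then have z: "fst w \<in> space D" using spP by auto
        show "norm (?h (\<phi> w)) \<le> 1 + B"
          using Fb[OF tF z] yb[OF z] unfolding unhinged_loss_def \<phi>_def case_prod_beta by auto
      qed
    qed (rule fm)
    have "risk (SLN M D \<rho>) unhinged_loss t = (\<integral>w. ?h (\<phi> w) \<partial>P)"
      unfolding risk_def SLN_def P_def[symmetric] \<phi>_def[symmetric]
      by (rule integral_distr[OF phi_meas hm])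
    also have "\<dots> = (\<integral>z. (\<integral>b. ?h (\<phi> (z, b)) \<partial>measure_pmf (bernoulli_pmf \<rho>)) \<partial>D)"
      using PP.integral_fst'[OF fint[unfolded P_def]] unfolding P_def by simp
    also have "\<dots> = (\<integral>z. 2 * \<rho> + (1 - 2 * \<rho>) * ?h z \<partial>D)"
      using assms(4,5)
      by (intro Bochner_Integration.integral_cong refl)
         (simp add: \<phi>_def case_prod_beta unhinged_loss_def algebra_simps)
    also have "\<dots> = 2 * \<rho> + (1 - 2 * \<rho>) * risk D unhinged_loss t"
      unfolding risk_def using int_unh[OF tF] by (simp add: D.prob_space)
    finally show ?thesis .
  qed
  have eq: "regret D ?F unhinged_loss s
      = 1 / (1 - 2 * \<rho>) * regret (SLN M D \<rho>) ?F unhinged_loss s"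
  proof -
    have "(INF t\<in>?F. risk (SLN M D \<rho>) unhinged_loss t)
        = (INF t\<in>?F. (1 - 2 * \<rho>) * risk D unhinged_loss t + 2 * \<rho>)"
      using riskSLN by (intro INF_cong) auto
    also have "\<dots> = (1 - 2 * \<rho>) * (INF t\<in>?F. risk D unhinged_loss t) + 2 * \<rho>"
      by (rule INF_affine[OF Fne risk_lb c_pos])
    finally show ?thesis
      unfolding regret_def riskSLN[OF sF] using c_pos by (simp add: field_simps)
  qed
  have zo_int: "integrable D (\<lambda>z. zero_one_loss (snd z) (t (fst z)))"
    if tm': "t \<in> borel_measurable M" for t
  proof (rule D.integrable_const_bound[where B="3/2"])
    show "AE z in D. norm (zero_one_loss (snd z) (t (fst z))) \<le> 3/2"
      by (rule AE_I2) (simp add: zero_one_loss_def)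
    have t1: "(\<lambda>z. t (fst z)) \<in> borel_measurable D" by (rule tm[OF tm'])
    have p1: "(\<lambda>z. snd z * t (fst z)) \<in> borel_measurable D"
      using snd_meas t1 by (rule borel_measurable_times)
    show "(\<lambda>z. zero_one_loss (snd z) (t (fst z))) \<in> borel_measurable D"
      unfolding zero_one_loss_def
      by (intro borel_measurable_add measurable_If borel_measurable_less[OF p1]
          borel_measurable_eq[OF t1] borel_measurable_const)
  qed
  have sm: "s \<in> borel_measurable M" using sF by (simp add: bounded_scorers_def)
  have key: "risk D zero_one_loss s - risk D zero_one_loss t
      \<le> regret D ?F unhinged_loss s" if tm': "t \<in> borel_measurable M" for t
  proof -
    define u where "u = (\<lambda>x. s x + zero_one_loss 1 (s x) - zero_one_loss 1 (t x))"
    have uF: "u \<in> ?F"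
    proof -
      have "u \<in> borel_measurable M" unfolding u_def using sm tm' by measurable
      moreover have "-B \<le> u x \<and> u x \<le> B" if x: "x \<in> space M" for x
        using sF x assms(3) unfolding bounded_scorers_def u_def zero_one_loss_def
        by (auto split: if_splits)
      ultimately show ?thesis unfolding bounded_scorers_def by auto
    qed
    have pw: "zero_one_loss (snd z) (s (fst z)) - zero_one_loss (snd z) (t (fst z))
        = unhinged_loss (snd z) (s (fst z)) - unhinged_loss (snd z) (u (fst z))"
      if z: "z \<in> space D" for z
    proof -
      have "zero_one_loss (-1) v = 1 - zero_one_loss 1 v" for v using zo_sum[of v] by simp
      then show ?thesis using yb[OF z] unfolding u_def unhinged_loss_def by auto
    qed
    have "risk D zero_one_loss s - risk D zero_one_loss t
        = (\<integral>z. zero_one_loss (snd z) (s (fst z)) - zero_one_loss (snd z) (t (fst z)) \<partial>D)"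
      unfolding risk_def using zo_int[OF sm] zo_int[OF tm'] by simp
    also have "\<dots> = (\<integral>z. unhinged_loss (snd z) (s (fst z)) - unhinged_loss (snd z) (u (fst z)) \<partial>D)"
      using pw by (intro Bochner_Integration.integral_cong) auto
    also have "\<dots> = risk D unhinged_loss s - risk D unhinged_loss u"
      unfolding risk_def using int_unh[OF sF] int_unh[OF uF] by simp
    also have "\<dots> \<le> regret D ?F unhinged_loss s"
      unfolding regret_def using cINF_lower[OF bddF uF] by simp
    finally show ?thesis .
  qed
  have "risk D zero_one_loss s - regret D ?F unhinged_loss s
      \<le> (INF t\<in>borel_measurable M. risk D zero_one_loss t)"
    using sm key by (intro cINF_greatest) (auto simp: algebra_simps)
  hence "regret01 M D s \<le> regret D ?F unhinged_loss s"
    unfolding regret01_def regret_def[of D "borel_measurable M"] by simp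
  with eq show ?thesis by simp
qed

end
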